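(* Fix $b\in\mathbb{N}$ and let $\Lambda:\mathbb{N}\times\mathbb{N}\to\mathbb{C}$ be a bounded function such that for each $k\in\mathbb{N}$ the limit \[ M_{b,k}(\Lambda)=\lim_{N\to\infty}\frac{\sum_{(r,s)\in T_{N,b,k}}\Lambda(r,s)}{|T_{N,b,k}|} \] exists, where $T_{N,b,k}=\{(r,s): 0<r,s\le N,\ \gcd_b(r,s)=k\}$. Let $\zeta_{\Lambda,b}(s)=\sum_{k=1}^\infty M_{b,k}(\Lambda)k^{-s}$. Then $\zeta_{\Lambda,b}(s)$ converges at $s=b+1$, the mean value $M(\Lambda)$ exists, and \[ M(\Lambda)=\frac{\zeta_{\Lambda,b}(b+1)}{\zeta(b+1)}, \] where $\zeta$ is the Riemann zeta function.
   Context: For $r,s\in\mathbb{N}$, $\gcd_b(r,s)=\max\{k\in\mathbb{N} : k\mid r \text{ and } k^b\mid s\}$. For $N\in\mathbb{N}$ let $T_N=\{(r,s): 0<r,s\le N\}$; the mean value of $\Lambda$ is $M(\Lambda)=\lim_{N\to\infty}\frac{1}{N^2}\sum_{(r,s)\in T_N}\Lambda(r,s)$. *)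

theory Defs
  imports "HOL-Analysis.Analysis"
begin

definition gcdb :: "nat \<Rightarrow> nat \<Rightarrow> nat \<Rightarrow> nat" where
  "gcdb b r s = Max {k. k dvd r \<and> k ^ b dvd s}"

definition TN :: "nat \<Rightarrow> (nat \<times> nat) set" where
  "TN N = {(r, s). 0 < r \<and> r \<le> N \<and> 0 < s \<and> s \<le> N}"

definition TNbk :: "nat \<Rightarrow> nat \<Rightarrow> nat \<Rightarrow> (nat \<times> nat) set" where
  "TNbk N b k = {(r, s). (r, s) \<in> TN N \<and> gcdb b r s = k}"

definition avg_bk :: "(nat \<Rightarrow> nat \<Rightarrow> complex) \<Rightarrow> nat \<Rightarrow> nat \<Rightarrow> nat \<Rightarrow> complex" where
  "avg_bk \<Lambda> b k N = (\<Sum>(r, s)\<in>TNbk N b k. \<Lambda> r s) / of_nat (card (TNbk N b k))"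

text \<open>M_{b,k}(Lambda), the limit of the averages (meaningful when it exists).\<close>
definition Mbk :: "(nat \<Rightarrow> nat \<Rightarrow> complex) \<Rightarrow> nat \<Rightarrow> nat \<Rightarrow> complex" where
  "Mbk \<Lambda> b k = lim (avg_bk \<Lambda> b k)"

text \<open>Riemann zeta at a positive integer s \<ge> 2: sum_{n \<ge> 1} n^{-s}.\<close>
definition zeta_nat :: "nat \<Rightarrow> complex" where
  "zeta_nat m = (\<Sum>n. 1 / of_nat (Suc n) ^ m)"

end

theory Submission
  imports Defs "HOL-Computational_Algebra.Squarefree"
begin

definition mu :: "nat \<Rightarrow> real" where
  "mu n = (if squarefree n then (-1) ^ card (prime_factors n) else 0)"

lemma mu_abs: "\<bar>mu n\<bar> \<le> 1"
  by (simp add: mu_def)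

lemma sum_pow_minus_one:
  "finite A \<Longrightarrow> (\<Sum>X\<in>Pow A. (-1::real) ^ card X) = (if A = {} then 1 else 0)"
  using prod_diff_conv_sum[of A "\<lambda>_. 1::real" "\<lambda>_. 1"]
  by (cases "A = {}") (auto simp: power_0_left)

lemma prime_factors_prod_primes:
  assumes "finite S" "\<forall>p\<in>S. prime (p::nat)"
  shows "prime_factors (\<Prod>S) = S"
proof -
  have "prime_factors (prod id S) = \<Union>((prime_factors \<circ> id) ` S)"
    using assms by (intro prime_factors_prod) auto
  also have "\<dots> = S" using assms by (auto simp: prime_factorization_prime)
  finally show ?thesis by simp
qed

lemma prod_primes_dvd:
  assumes "finite S" "S \<subseteq> prime_factors (n::nat)"
  shows "\<Prod>S dvd n"
  using assms
proof (induction S rule: finite_induct)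
  case empty then show ?case by simp
next
  case (insert p S)
  have "coprime p (\<Prod>S)"
    using insert by (intro prod_coprime_right) (auto intro!: primes_coprime)
  moreover have "p dvd n" using insert by auto
  ultimately show ?case using insert by (auto intro: divides_mult)
qed

lemma sqf_divisors:
  assumes "n > (0::nat)"
  shows "{d. d dvd n \<and> squarefree d} = (\<lambda>S. \<Prod>S) ` Pow (prime_factors n)"
proof
  show "(\<lambda>S. \<Prod>S) ` Pow (prime_factors n) \<subseteq> {d. d dvd n \<and> squarefree d}"
  proof clarify
    fix S assume S: "S \<subseteq> prime_factors n"
    have fin: "finite S" using S finite_subset by blast
    have "squarefree (prod id S)"
      using S by (intro squarefree_prod_coprime) (auto intro: primes_coprime squarefree_prime)
    then show "\<Prod>S dvd n \<and> squarefree (\<Prod>S)"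
      using prod_primes_dvd[OF fin S] by simp
  qed
next
  show "{d. d dvd n \<and> squarefree d} \<subseteq> (\<lambda>S. \<Prod>S) ` Pow (prime_factors n)"
  proof clarify
    fix d assume d: "d dvd n" "squarefree d"
    have d0: "d \<noteq> 0" using d assms by auto
    have "(\<Prod>p\<in>prime_factors d. p ^ multiplicity p d) = d"
      using prod_prime_factors[OF d0] by simp
    moreover have "\<forall>p\<in>prime_factors d. multiplicity p d = 1"
      using d(2) squarefree_factorial_semiring'[OF d0] by simp
    ultimately have "d = \<Prod>(prime_factors d)" by simp
    moreover have "prime_factors d \<subseteq> prime_factors n"
      using d d0 assms by (auto simp: prime_factors_dvd intro: dvd_trans)
    ultimately show "d \<in> (\<lambda>S. \<Prod>S) ` Pow (prime_factors n)" by blast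
  qed
qed

lemma mu_sum:
  assumes "n > (0::nat)"
  shows "(\<Sum>d | d dvd n. mu d) = (if n = 1 then 1 else 0)"
proof -
  have fin: "finite {d. d dvd n}" using assms by simp
  have "(\<Sum>d | d dvd n. mu d) = (\<Sum>d \<in> {d. d dvd n \<and> squarefree d}. (-1) ^ card (prime_factors d))"
    using fin by (intro sum.mono_neutral_cong_right) (auto simp: mu_def)
  also have "\<dots> = (\<Sum>S \<in> Pow (prime_factors n). (-1) ^ card (prime_factors (\<Prod>S)))"
  proof (subst sqf_divisors[OF assms], rule sum.reindex_cong[OF _ refl])
    show "inj_on Prod (Pow (prime_factors n))"
    proof (rule inj_onI)
      fix S T assume "S \<in> Pow (prime_factors n)" "T \<in> Pow (prime_factors n)" "\<Prod>S = \<Prod>T"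
      then show "S = T"
        by (metis PowD finite_subset finite_set_mset in_prime_factors_imp_prime prime_factors_prod_primes subset_iff)
    qed
  qed auto
  also have "\<dots> = (\<Sum>S \<in> Pow (prime_factors n). (-1) ^ card S)"
    by (intro sum.cong refl) (metis PowD finite_subset finite_set_mset in_prime_factors_imp_prime prime_factors_prod_primes subset_iff)
  also have "\<dots> = (if prime_factors n = {} then 1 else 0)"
    by (rule sum_pow_minus_one) simp
  also have "(prime_factors n = {}) \<longleftrightarrow> n = 1"
  proof
    assume "prime_factors n = {}"
    then show "n = 1" using assms
      by (metis Nat.add_0_right One_nat_def all_not_in_conv in_prime_factors_iff less_one nat_neq_iff prime_factor_nat)
  qed simp
  finally show ?thesis .
qed

lemma gcdb_set_finite: "r > 0 \<Longrightarrow> finite {k. k dvd r \<and> k ^ b dvd (s::nat)}"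
  by (rule finite_subset[of _ "{..r}"]) (auto dest: dvd_imp_le)

lemma gcdb_mem:
  assumes "r > 0"
  shows "gcdb b r s dvd r \<and> gcdb b r s ^ b dvd s"
proof -
  have "gcdb b r s \<in> {k. k dvd r \<and> k ^ b dvd s}"
    unfolding gcdb_def using gcdb_set_finite[OF assms] by (intro Max_in) auto
  then show ?thesis by simp
qed

lemma gcdb_pos: "r > 0 \<Longrightarrow> gcdb b r s > 0"
  using gcdb_mem[of r b s] by (cases "gcdb b r s") auto

lemma gcdb_le: "r > 0 \<Longrightarrow> gcdb b r s \<le> r"
  using gcdb_mem[of r b s] by (simp add: dvd_imp_le)

lemma lcm_pow_nat: "lcm (a::nat) c ^ b = lcm (a ^ b) (c ^ b)"
proof (cases "gcd a c = 0")
  case True then show ?thesis by (cases b) auto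
next
  case False
  have e1: "lcm a c * gcd a c = a * c" using prod_gcd_lcm_nat[of a c] by (simp add: mult.commute)
  have e2: "a ^ b * c ^ b = lcm (a ^ b) (c ^ b) * gcd (a ^ b) (c ^ b)"
    using prod_gcd_lcm_nat[of "a ^ b" "c ^ b"] by (simp add: mult.commute)
  have "lcm a c ^ b * gcd a c ^ b = (lcm a c * gcd a c) ^ b" by (simp only: power_mult_distrib)
  also have "\<dots> = (a * c) ^ b" by (simp only: e1)
  also have "\<dots> = a ^ b * c ^ b" by (simp add: power_mult_distrib)
  also have "\<dots> = lcm (a ^ b) (c ^ b) * gcd a c ^ b" by (simp only: e2 gcd_exp)
  finally have "lcm a c ^ b * gcd a c ^ b = lcm (a ^ b) (c ^ b) * gcd a c ^ b" .
  moreover have "gcd a c ^ b \<noteq> 0" using False by auto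
  ultimately show ?thesis using mult_right_cancel by blast
qed

lemma gcdb_dvd_iff:
  assumes "r > 0"
  shows "d dvd gcdb b r s \<longleftrightarrow> d dvd r \<and> d ^ b dvd s"
proof
  assume "d dvd gcdb b r s"
  then show "d dvd r \<and> d ^ b dvd s"
    using gcdb_mem[OF assms, of b s] by (auto intro: dvd_trans dvd_power_same)
next
  assume d: "d dvd r \<and> d ^ b dvd s"
  define M where "M = gcdb b r s"
  have M: "M dvd r" "M ^ b dvd s" using gcdb_mem[OF assms] M_def by auto
  have M0: "M > 0" using gcdb_pos[OF assms] M_def by simp
  have L: "lcm d M dvd r \<and> lcm d M ^ b dvd s"
    using d M by (auto simp: lcm_pow_nat intro: lcm_least)
  have "lcm d M \<le> M"
    unfolding M_def gcdb_def using gcdb_set_finite[OF assms] L M_def gcdb_def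
    by (intro Max_ge) auto
  moreover have "M \<le> lcm d M"
    using M0 L assms by (intro dvd_imp_le) (auto intro: Nat.gr0I)
  ultimately have "lcm d M = M" by simp
  then show "d dvd gcdb b r s" using M_def by (metis dvd_lcm1)
qed

lemma TN_eq: "TN N = {1..N} \<times> {1..N}"
  by (auto simp: TN_def)

lemma finite_TN: "finite (TN N)"
  by (simp add: TN_eq)

lemma card_TN: "card (TN N) = N * N"
  by (simp add: TN_eq)

lemma card_multiples:
  assumes "m > (0::nat)"
  shows "card {r \<in> {1..N}. m dvd r} = N div m"
proof -
  have "{r \<in> {1..N}. m dvd r} = (\<lambda>i. i * m) ` {1..N div m}"
  proof safe
    fix r assume r: "r \<in> {1..N}" "m dvd r"
    then obtain i where i: "r = i * m" by (auto elim: dvdE simp: mult.commute)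
    have "i \<ge> 1" using r i by (cases i) auto
    moreover have "i \<le> N div m" using r i assms
      by (metis atLeastAtMost_iff div_le_mono nonzero_mult_div_cancel_right not_gr0)
    ultimately show "r \<in> (\<lambda>i. i * m) ` {1..N div m}" using i by auto
  next
    fix i assume "i \<in> {1..N div m}"
    then show "i * m \<in> {1..N}" using assms
      by (auto simp: less_eq_div_iff_mult_less_eq Suc_le_eq)
  qed auto
  moreover have "inj_on (\<lambda>i. i * m) {1..N div m}" using assms by (auto intro: inj_onI)
  ultimately show ?thesis by (simp add: card_image)
qed

lemma card_TN_dvd:
  assumes "m > (0::nat)"
  shows "card {(r, s) \<in> TN N. m dvd r \<and> m ^ b dvd s} = (N div m) * (N div m ^ b)"
proof -
  have "{(r, s) \<in> TN N. m dvd r \<and> m ^ b dvd s} = {r \<in> {1..N}. m dvd r} \<times> {s \<in> {1..N}. m ^ b dvd s}"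
    by (auto simp: TN_def)
  then show ?thesis using card_multiples[OF assms] card_multiples[of "m ^ b"] assms
    by (simp add: card_cartesian_product)
qed

lemma TNbk_alt: "TNbk N b k = {x \<in> TN N. gcdb b (fst x) (snd x) = k}"
  by (auto simp: TNbk_def)

lemma finite_TNbk: "finite (TNbk N b k)"
  unfolding TNbk_alt using finite_TN by simp

lemma TN_pos: "x \<in> TN N \<Longrightarrow> fst x > 0 \<and> fst x \<le> N \<and> snd x > 0 \<and> snd x \<le> N"
  by (auto simp: TN_def)

lemma indicator_mu:
  assumes "k > 0" "x \<in> TN N"
  shows "(if gcdb b (fst x) (snd x) = k then 1 else 0::real)
       = (\<Sum>d\<in>{1..N}. mu d * (if k * d dvd gcdb b (fst x) (snd x) then 1 else 0))"
proof -
  define G where "G = gcdb b (fst x) (snd x)"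
  have r: "fst x > 0" "fst x \<le> N" using TN_pos[OF assms(2)] by auto
  have G0: "G > 0" using gcdb_pos[OF r(1)] G_def by auto
  have GN: "G \<le> N" using gcdb_le[OF r(1), of b "snd x"] r(2) unfolding G_def by linarith
  show ?thesis
  proof (cases "k dvd G")
    case True
    then obtain m where m: "G = k * m" by (auto elim: dvdE)
    have m0: "m > 0" using m G0 by (cases m) auto
    have mN: "m \<le> N"
    proof -
      have "m \<le> k * m" using assms(1) by simp
      then show ?thesis using GN m by linarith
    qed
    have "(\<Sum>d\<in>{1..N}. mu d * (if k * d dvd G then 1 else 0))
        = (\<Sum>d\<in>{1..N}. if d dvd m then mu d else 0)"
      using assms(1) by (intro sum.cong refl) (auto simp: m)
    also have "\<dots> = (\<Sum>d\<in>{d \<in> {1..N}. d dvd m}. mu d)"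
      by (subst sum.inter_filter) auto
    also have "{d \<in> {1..N}. d dvd m} = {d. d dvd m}"
      using m0 mN by (auto dest: dvd_imp_le intro: Nat.gr0I simp: Suc_le_eq)
    also have "(\<Sum>d | d dvd m. mu d) = (if m = 1 then 1 else 0)"
      by (rule mu_sum[OF m0])
    also have "(m = 1) \<longleftrightarrow> G = k" using m assms(1) by auto
    finally show ?thesis unfolding G_def by simp
  next
    case False
    then have "G \<noteq> k" by auto
    moreover have "\<And>d. \<not> k * d dvd G" using False by (auto intro: dvd_mult_left)
    ultimately show ?thesis unfolding G_def by simp
  qed
qed

lemma card_TNbk_mu:
  assumes "k > 0"
  shows "real (card (TNbk N b k)) = (\<Sum>d\<in>{1..N}. mu d * real ((N div (k * d)) * (N div (k * d) ^ b)))"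
proof -
  have "real (card (TNbk N b k)) = (\<Sum>x\<in>TN N. if gcdb b (fst x) (snd x) = k then 1 else 0::real)"
    unfolding TNbk_alt using finite_TN by (simp add: sum.inter_filter[symmetric])
  also have "\<dots> = (\<Sum>x\<in>TN N. \<Sum>d\<in>{1..N}. mu d * (if k * d dvd gcdb b (fst x) (snd x) then 1 else 0))"
    using assms by (intro sum.cong refl indicator_mu)
  also have "\<dots> = (\<Sum>d\<in>{1..N}. mu d * (\<Sum>x\<in>TN N. if k * d dvd gcdb b (fst x) (snd x) then 1 else 0))"
    by (subst sum.swap) (simp add: sum_distrib_left)
  also have "\<dots> = (\<Sum>d\<in>{1..N}. mu d * real (card {x \<in> TN N. k * d dvd gcdb b (fst x) (snd x)}))"
    using finite_TN by (simp add: sum.inter_filter[symmetric])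
  also have "\<dots> = (\<Sum>d\<in>{1..N}. mu d * real ((N div (k * d)) * (N div (k * d) ^ b)))"
  proof (intro sum.cong refl)
    fix d assume d: "d \<in> {1..N}"
    have "{x \<in> TN N. k * d dvd gcdb b (fst x) (snd x)} = {(r, s) \<in> TN N. k * d dvd r \<and> (k * d) ^ b dvd s}"
      using gcdb_dvd_iff TN_pos by fastforce
    then show "mu d * real (card {x \<in> TN N. k * d dvd gcdb b (fst x) (snd x)}) = mu d * real ((N div (k * d)) * (N div (k * d) ^ b))"
      using card_TN_dvd[of "k * d" N b] d assms by simp
  qed
  finally show ?thesis .
qed

lemma ratio_bounds:
  assumes "m > (0::nat)"
  shows "0 \<le> real (N div m) / real N \<and> real (N div m) / real N \<le> 1 / real m"
proof (cases "N = 0")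
  case False
  have "real N = real (N div m) * real m + real (N mod m)"
    by (metis of_nat_add of_nat_mult div_mult_mod_eq)
  then have "real (N div m) * real m \<le> real N" by simp
  then have "real (N div m) \<le> real N / real m" using assms by (simp add: field_simps)
  then show ?thesis using False assms by (simp add: field_simps)
qed simp

lemma div_ratio_lim:
  assumes "m > (0::nat)"
  shows "(\<lambda>N. real (N div m) / real N) \<longlonglongrightarrow> 1 / real m"
proof -
  have ev: "\<forall>\<^sub>F N in sequentially. 1 / real m - real (N mod m) / (real m * real N) = real (N div m) / real N"
    using eventually_gt_at_top[of 0]
  proof eventually_elim
    case (elim N)
    have "real N = real (N div m) * real m + real (N mod m)"
      by (metis of_nat_add of_nat_mult div_mult_mod_eq)
    then have h: "real (N div m) = (real N - real (N mod m)) / real m"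
      using assms by (simp add: field_simps)
    have "real (N div m) / real N = (real N - real (N mod m)) / (real m * real N)"
      unfolding h by simp
    also have "\<dots> = 1 / real m - real (N mod m) / (real m * real N)"
      using elim assms by (simp add: diff_divide_distrib)
    finally show ?case by simp
  qed
  have "(\<lambda>N. real (N mod m) / (real m * real N)) \<longlonglongrightarrow> 0"
  proof (rule tendsto_sandwich[of "\<lambda>_. 0" _ _ "\<lambda>N. 1 / real N"])
    show "\<forall>\<^sub>F N in sequentially. 0 \<le> real (N mod m) / (real m * real N)" by simp
    show "\<forall>\<^sub>F N in sequentially. real (N mod m) / (real m * real N) \<le> 1 / real N"
      using eventually_gt_at_top[of 0]
    proof eventually_elim
      case (elim N)
      have "real (N mod m) \<le> real m" using assms by simp
      then have "real (N mod m) / (real m * real N) \<le> real m / (real m * real N)"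
        using elim assms by (intro divide_right_mono) auto
      then show ?case using assms by simp
    qed
  qed (auto intro: lim_1_over_n)
  then have "(\<lambda>N. 1 / real m - real (N mod m) / (real m * real N)) \<longlonglongrightarrow> 1 / real m - 0"
    by (intro tendsto_intros)
  then show ?thesis using ev by (simp add: tendsto_cong)
qed

lemma summable_zeta_real:
  assumes "b \<ge> 1"
  shows "summable (\<lambda>n. 1 / real (Suc n) ^ (b + 1))"
proof -
  have "summable (\<lambda>n. inverse (real n ^ (b + 1)))"
    using assms by (intro inverse_power_summable) auto
  then have "summable (\<lambda>n. inverse (real (Suc n) ^ (b + 1)))"
    by (subst summable_Suc_iff)
  then show ?thesis by (simp add: inverse_eq_divide)
qed

definition Mu :: "nat \<Rightarrow> real" where
  "Mu b = (\<Sum>d. mu (Suc d) / real (Suc d) ^ (b + 1))"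

lemma summable_Mu:
  assumes "b \<ge> 1"
  shows "summable (\<lambda>d. mu (Suc d) / real (Suc d) ^ (b + 1))"
proof (rule summable_comparison_test[OF _ summable_zeta_real[OF assms]])
  show "\<exists>N. \<forall>n\<ge>N. norm (mu (Suc n) / real (Suc n) ^ (b + 1)) \<le> 1 / real (Suc n) ^ (b + 1)"
  proof (intro exI allI impI)
    fix n :: nat
    have "\<bar>mu (Suc n)\<bar> / real (Suc n) ^ (b + 1) \<le> 1 / real (Suc n) ^ (b + 1)"
      using mu_abs[of "Suc n"] by (rule divide_right_mono) simp
    then show "norm (mu (Suc n) / real (Suc n) ^ (b + 1)) \<le> 1 / real (Suc n) ^ (b + 1)"
      by (simp add: abs_divide)
  qed
qed

lemma TNbk_empty:
  assumes "k > N"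
  shows "TNbk N b k = {}"
proof -
  have False if "(r, s) \<in> TNbk N b k" for r s
  proof -
    have "0 < r" "r \<le> N" "gcdb b r s = k" using that by (auto simp: TNbk_def TN_def)
    then show False using gcdb_le[of r b s] assms by linarith
  qed
  then show ?thesis by auto
qed

lemma card_TNbk_le:
  assumes "k > 0"
  shows "card (TNbk N b k) \<le> (N div k) * (N div k ^ b)"
proof -
  have "TNbk N b k \<subseteq> {(r, s) \<in> TN N. k dvd r \<and> k ^ b dvd s}"
  proof clarify
    fix r s assume rs: "(r, s) \<in> TNbk N b k"
    then have "(r, s) \<in> TN N" "gcdb b r s = k" "0 < r" by (auto simp: TNbk_def TN_def)
    then show "(r, s) \<in> TN N \<and> k dvd r \<and> k ^ b dvd s" using gcdb_mem[of r b s] by simp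
  qed
  then have "card (TNbk N b k) \<le> card {(r, s) \<in> TN N. k dvd r \<and> k ^ b dvd s}"
    by (rule card_mono[rotated]) (rule finite_subset[OF _ finite_TN], auto)
  then show ?thesis using card_TN_dvd[OF assms] by simp
qed

lemma prod_ratio_bound:
  assumes "m1 > (0::nat)" "m2 > 0"
  shows "real (N div m1) / real N * (real (N div m2) / real N) \<le> 1 / real m1 * (1 / real m2)"
proof -
  have r1: "0 \<le> real (N div m1) / real N \<and> real (N div m1) / real N \<le> 1 / real m1"
    by (rule ratio_bounds[OF assms(1)])
  have r2: "0 \<le> real (N div m2) / real N \<and> real (N div m2) / real N \<le> 1 / real m2"
    by (rule ratio_bounds[OF assms(2)])
  have p: "0 \<le> 1 / real m1" by simp
  show ?thesis by (rule mult_mono[OF conjunct2[OF r1] conjunct2[OF r2] p conjunct1[OF r2]])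
qed

lemma density_bound:
  assumes "k > 0"
  shows "real (card (TNbk N b k)) / real (N ^ 2) \<le> 1 / real k * (1 / real (k ^ b))"
proof -
  have "real (card (TNbk N b k)) / real (N ^ 2) \<le> real ((N div k) * (N div k ^ b)) / real (N ^ 2)"
  proof -
    have "real (card (TNbk N b k)) \<le> real ((N div k) * (N div k ^ b))"
      using card_TNbk_le[OF assms, of N b] by (simp only: of_nat_le_iff)
    then show ?thesis by (rule divide_right_mono) simp
  qed
  also have "\<dots> = real (N div k) / real N * (real (N div k ^ b) / real N)"
    by (simp add: power2_eq_square)
  also have "\<dots> \<le> 1 / real k * (1 / real (k ^ b))"
    using assms by (intro prod_ratio_bound) auto
  finally show ?thesis .
qed

lemma inv_pow_le:
  assumes "k \<ge> d" "d > (0::nat)"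
  shows "1 / real k * (1 / real (k ^ b)) \<le> 1 / real d ^ (b + 1)"
proof -
  have "real d ^ (b + 1) \<le> real k * real k ^ b"
  proof -
    have "real d \<le> real k" using assms by simp
    then have "real d * real d ^ b \<le> real k * real k ^ b"
      by (intro mult_mono power_mono) auto
    then show ?thesis by simp
  qed
  then show ?thesis using assms by (simp add: field_simps)
qed

lemma aux_pow: "(x::real) * (1 / (K * S) * (1 / ((K * S) ^ b))) = x / S ^ (b + 1) / K ^ (b + 1)"
  by (simp add: power_mult_distrib mult_ac)

lemma aux_pow_nat: "(x::real) * (1 / real (k * s) * (1 / real ((k * s) ^ b))) = x / real s ^ (b + 1) / real k ^ (b + 1)"
  using aux_pow[of x "real k" "real s" b] by (simp only: of_nat_mult of_nat_power)

lemma tannery_simple: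
  fixes a :: "nat \<Rightarrow> nat \<Rightarrow> 'a :: {real_normed_algebra, banach}"
  assumes lim: "\<And>d. (\<lambda>N. a d N) \<longlonglongrightarrow> L d"
    and bnd: "\<And>d N. norm (a d N) \<le> M d" and sM: "summable M"
  shows "(\<lambda>N. \<Sum>d. a d N) \<longlonglongrightarrow> (\<Sum>d. L d)"
proof -
  have ev: "eventually (\<lambda>(d, N). norm (a d N) \<le> M d) (sequentially \<times>\<^sub>F sequentially)"
    by (rule always_eventually) (use bnd in auto)
  from tannerys_theorem[of a L sequentially M, OF lim ev sM]
  show ?thesis by simp
qed

lemma density:
  assumes "k > 0" "b \<ge> 1"
  shows "(\<lambda>N. real (card (TNbk N b k)) / real (N ^ 2)) \<longlonglongrightarrow> Mu b / real k ^ (b + 1)"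
proof -
  define a where "a = (\<lambda>d N. mu (Suc d) * (real (N div (k * Suc d)) / real N * (real (N div (k * Suc d) ^ b) / real N)))"
  have eq: "real (card (TNbk N b k)) / real (N ^ 2) = (\<Sum>d. a d N)" for N
  proof -
    have "real (card (TNbk N b k)) / real (N ^ 2)
        = (\<Sum>d\<in>{1..N}. mu d * real ((N div (k * d)) * (N div (k * d) ^ b)) / real (N ^ 2))"
      unfolding card_TNbk_mu[OF assms(1)] by (simp add: sum_divide_distrib)
    also have "\<dots> = (\<Sum>d<N. mu (Suc d) * real ((N div (k * Suc d)) * (N div (k * Suc d) ^ b)) / real (N ^ 2))"
      using sum.atLeast1_atMost_eq[of "\<lambda>d. mu d * real ((N div (k * d)) * (N div (k * d) ^ b)) / real (N ^ 2)" N]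
      by simp
    also have "\<dots> = (\<Sum>d<N. a d N)"
      unfolding a_def by (intro sum.cong refl) (simp add: power2_eq_square times_divide_times_eq)
    also have "\<dots> = (\<Sum>d. a d N)"
    proof (rule suminf_finite[symmetric])
      fix d assume "d \<notin> {..<N}"
      then have "N \<le> d" by simp
      moreover have "Suc d \<le> k * Suc d" using assms(1) mult_le_mono1[of 1 k "Suc d"] by simp
      then have "d < k * Suc d" by simp
      ultimately have "N < k * Suc d" by linarith
      then show "a d N = 0" unfolding a_def by simp
    qed simp
    finally show ?thesis .
  qed
  have lim: "(\<lambda>N. a d N) \<longlonglongrightarrow> mu (Suc d) * (1 / real (k * Suc d) * (1 / real ((k * Suc d) ^ b)))" for d
  proof -
    have l1: "(\<lambda>N. real (N div (k * Suc d)) / real N) \<longlonglongrightarrow> 1 / real (k * Suc d)"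
      by (rule div_ratio_lim) (use assms(1) in simp)
    have l2: "(\<lambda>N. real (N div (k * Suc d) ^ b) / real N) \<longlonglongrightarrow> 1 / real ((k * Suc d) ^ b)"
      by (rule div_ratio_lim) (use assms(1) in simp)
    show ?thesis unfolding a_def by (rule tendsto_mult[OF tendsto_const tendsto_mult[OF l1 l2]])
  qed
  have bnd: "norm (a d N) \<le> 1 / real (Suc d) ^ (b + 1)" for d N
  proof -
    have "norm (a d N) = \<bar>mu (Suc d)\<bar> * (real (N div (k * Suc d)) / real N * (real (N div (k * Suc d) ^ b) / real N))"
      unfolding a_def by (simp add: abs_mult)
    also have "\<dots> \<le> 1 * (1 / real (k * Suc d) * (1 / real ((k * Suc d) ^ b)))"
      using assms(1) mu_abs by (intro mult_mono prod_ratio_bound) auto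
    also have "\<dots> \<le> 1 / real (Suc d) ^ (b + 1)"
      using assms(1) mult_le_mono1[of 1 k "Suc d"] by (simp only: mult_1_left) (intro inv_pow_le, auto)
    finally show ?thesis .
  qed
  have T: "((\<lambda>N. \<Sum>d. a d N) \<longlonglongrightarrow> (\<Sum>d. mu (Suc d) * (1 / real (k * Suc d) * (1 / real ((k * Suc d) ^ b)))))"
    by (rule tannery_simple[OF lim bnd summable_zeta_real[OF assms(2)]])
  have X: "(\<lambda>d. mu (Suc d) * (1 / real (k * Suc d) * (1 / real ((k * Suc d) ^ b))))
      = (\<lambda>d. mu (Suc d) / real (Suc d) ^ (b + 1) / real k ^ (b + 1))"
    by (rule ext) (rule aux_pow_nat)
  have Y: "(\<Sum>d. mu (Suc d) / real (Suc d) ^ (b + 1) / real k ^ (b + 1)) = Mu b / real k ^ (b + 1)"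
    unfolding Mu_def using summable_Mu[OF assms(2)] by (rule suminf_divide)
  have E: "(\<lambda>N. real (card (TNbk N b k)) / real (N ^ 2)) = (\<lambda>N. \<Sum>d. a d N)"
    by (intro ext eq)
  show ?thesis unfolding E using T unfolding X Y .
qed

lemma decomp: "(\<Sum>x\<in>TN N. f x) = (\<Sum>k<N. \<Sum>x\<in>TNbk N b (Suc k). f x)"
proof -
  have img: "(\<lambda>x. gcdb b (fst x) (snd x) - 1) ` TN N \<subseteq> {..<N}"
  proof clarify
    fix r s assume "(r, s) \<in> TN N"
    then have "0 < r" "r \<le> N" by (auto simp: TN_def)
    then show "gcdb b (fst (r, s)) (snd (r, s)) - 1 < N"
      using gcdb_le[of r b s] gcdb_pos[of r b s] by simp
  qed
  have "(\<Sum>k<N. sum f {x \<in> TN N. gcdb b (fst x) (snd x) - 1 = k}) = sum f (TN N)"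
    by (rule sum.group[OF finite_TN finite_lessThan img])
  moreover have "{x \<in> TN N. gcdb b (fst x) (snd x) - 1 = k} = TNbk N b (Suc k)" for k
  proof -
    have "x \<in> TN N \<Longrightarrow> gcdb b (fst x) (snd x) > 0" for x
      using gcdb_pos TN_pos by blast
    then show ?thesis unfolding TNbk_alt by force
  qed
  ultimately show ?thesis by simp
qed

lemma Mu_zeta:
  assumes "b \<ge> 1"
  shows "Mu b * (\<Sum>n. 1 / real (Suc n) ^ (b + 1)) = 1"
proof -
  define a where "a = (\<lambda>k N. real (card (TNbk N b (Suc k))) / real (N ^ 2))"
  have lim: "(\<lambda>N. a k N) \<longlonglongrightarrow> Mu b / real (Suc k) ^ (b + 1)" for k
    unfolding a_def by (rule density[OF _ assms]) simp
  have bnd: "norm (a k N) \<le> 1 / real (Suc k) ^ (b + 1)" for k N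
  proof -
    have "norm (a k N) = real (card (TNbk N b (Suc k))) / real (N ^ 2)" unfolding a_def by simp
    also have "\<dots> \<le> 1 / real (Suc k) * (1 / real (Suc k ^ b))" by (rule density_bound) simp
    also have "\<dots> \<le> 1 / real (Suc k) ^ (b + 1)" by (rule inv_pow_le) auto
    finally show ?thesis .
  qed
  have T: "(\<lambda>N. \<Sum>k. a k N) \<longlonglongrightarrow> (\<Sum>k. Mu b / real (Suc k) ^ (b + 1))"
    by (rule tannery_simple[OF lim bnd summable_zeta_real[OF assms]])
  have ev: "\<forall>\<^sub>F N in sequentially. (\<Sum>k. a k N) = 1"
    using eventually_gt_at_top[of 0]
  proof eventually_elim
    case (elim N)
    have "(\<Sum>k. a k N) = (\<Sum>k<N. a k N)"
    proof (rule suminf_finite)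
      fix k assume "k \<notin> {..<N}"
      then have "Suc k > N" by simp
      then show "a k N = 0" unfolding a_def by (simp add: TNbk_empty)
    qed simp
    also have "\<dots> = (\<Sum>k<N. real (card (TNbk N b (Suc k)))) / real (N ^ 2)"
      unfolding a_def by (simp add: sum_divide_distrib)
    also have "(\<Sum>k<N. real (card (TNbk N b (Suc k)))) = (\<Sum>k<N. \<Sum>x\<in>TNbk N b (Suc k). (1::real))"
      by simp
    also have "\<dots> = (\<Sum>x\<in>TN N. (1::real))" by (rule decomp[symmetric])
    also have "\<dots> = real (N ^ 2)" by (simp add: card_TN power2_eq_square)
    finally show ?case using elim by simp
  qed
  have "(\<lambda>N. \<Sum>k. a k N) \<longlonglongrightarrow> 1"
    using tendsto_const[of 1 sequentially] ev by (simp add: tendsto_cong)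
  with T have "(\<Sum>k. Mu b / real (Suc k) ^ (b + 1)) = 1" by (rule LIMSEQ_unique)
  moreover have "(\<Sum>k. Mu b / real (Suc k) ^ (b + 1)) = Mu b * (\<Sum>n. 1 / real (Suc n) ^ (b + 1))"
  proof -
    have "(\<Sum>k. Mu b * (1 / real (Suc k) ^ (b + 1))) = Mu b * (\<Sum>n. 1 / real (Suc n) ^ (b + 1))"
      by (rule suminf_mult[OF summable_zeta_real[OF assms]])
    then show ?thesis by simp
  qed
  ultimately show ?thesis by simp
qed

lemma avg_times:
  fixes S :: complex
  assumes "n = 0 \<Longrightarrow> S = 0"
  shows "complex_of_real (real n / real M) * (S / of_nat n) = S / of_nat M"
proof (cases "n = 0")
  case True then show ?thesis using assms by simp
next
  case False
  then show ?thesis by (simp add: of_real_divide field_simps)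
qed

lemma avg_norm:
  assumes "\<forall>r s. norm (\<Lambda> r s) \<le> B"
  shows "norm (avg_bk \<Lambda> b k N) \<le> B"
proof -
  have B0: "0 \<le> B" using assms norm_ge_zero order_trans by blast
  have "norm (\<Sum>(r, s)\<in>TNbk N b k. \<Lambda> r s) \<le> (\<Sum>x\<in>TNbk N b k. B)"
    by (rule sum_norm_le) (use assms in auto)
  also have "\<dots> = real (card (TNbk N b k)) * B" by simp
  finally have *: "norm (\<Sum>(r, s)\<in>TNbk N b k. \<Lambda> r s) \<le> real (card (TNbk N b k)) * B" .
  show ?thesis
  proof (cases "card (TNbk N b k) = 0")
    case True then show ?thesis using B0 by (simp add: avg_bk_def)
  next
    case False
    have "norm (avg_bk \<Lambda> b k N) = norm (\<Sum>(r, s)\<in>TNbk N b k. \<Lambda> r s) / real (card (TNbk N b k))"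
      by (simp add: avg_bk_def norm_divide)
    also have "\<dots> \<le> real (card (TNbk N b k)) * B / real (card (TNbk N b k))"
      by (rule divide_right_mono[OF *]) simp
    also have "\<dots> = B" using False by simp
    finally show ?thesis .
  qed
qed

theorem mainTheorem6:
  fixes \<Lambda> :: "nat \<Rightarrow> nat \<Rightarrow> complex" and b :: nat
  assumes b_pos: "b \<ge> 1"
    and bounded: "\<exists>B. \<forall>r s. norm (\<Lambda> r s) \<le> B"
    and lim_exists: "\<forall>k\<ge>1. convergent (avg_bk \<Lambda> b k)"
  shows "summable (\<lambda>n. Mbk \<Lambda> b (Suc n) / of_nat (Suc n) ^ (b + 1)) \<and>
         (\<lambda>N. (\<Sum>(r, s)\<in>TN N. \<Lambda> r s) / of_nat (N ^ 2))
           \<longlonglongrightarrow> (\<Sum>n. Mbk \<Lambda> b (Suc n) / of_nat (Suc n) ^ (b + 1)) / zeta_nat (b + 1)"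
proof -
  obtain B where B: "\<forall>r s. norm (\<Lambda> r s) \<le> B" using bounded by blast
  have Mlim: "avg_bk \<Lambda> b (Suc k) \<longlonglongrightarrow> Mbk \<Lambda> b (Suc k)" for k
    using lim_exists unfolding Mbk_def by (simp add: convergent_LIMSEQ_iff)
  have Mnorm: "norm (Mbk \<Lambda> b (Suc k)) \<le> B" for k
  proof (rule LIMSEQ_le_const2)
    show "(\<lambda>N. norm (avg_bk \<Lambda> b (Suc k) N)) \<longlonglongrightarrow> norm (Mbk \<Lambda> b (Suc k))"
      by (rule tendsto_norm[OF Mlim])
    show "\<exists>N. \<forall>n\<ge>N. norm (avg_bk \<Lambda> b (Suc k) n) \<le> B" using avg_norm[OF B] by blast
  qed
  have sZ: "summable (\<lambda>n. B * (1 / real (Suc n) ^ (b + 1)))"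
    by (rule summable_mult[OF summable_zeta_real[OF b_pos]])
  have S: "summable (\<lambda>n. Mbk \<Lambda> b (Suc n) / of_nat (Suc n) ^ (b + 1))"
  proof (rule summable_comparison_test[OF _ sZ], intro exI allI impI)
    fix n :: nat
    have "norm (Mbk \<Lambda> b (Suc n) / of_nat (Suc n) ^ (b + 1)) = norm (Mbk \<Lambda> b (Suc n)) / real (Suc n) ^ (b + 1)"
      by (simp only: norm_divide norm_power norm_of_nat)
    also have "\<dots> \<le> B / real (Suc n) ^ (b + 1)"
      by (rule divide_right_mono[OF Mnorm]) simp
    finally show "norm (Mbk \<Lambda> b (Suc n) / of_nat (Suc n) ^ (b + 1)) \<le> B * (1 / real (Suc n) ^ (b + 1))"
      by simp
  qed
  define a where "a = (\<lambda>k N. complex_of_real (real (card (TNbk N b (Suc k))) / real (N ^ 2)) * avg_bk \<Lambda> b (Suc k) N)"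
  have a_eq: "a k N = (\<Sum>(r, s)\<in>TNbk N b (Suc k). \<Lambda> r s) / of_nat (N ^ 2)" for k N
    unfolding a_def avg_bk_def
    by (rule avg_times) (simp add: finite_TNbk)
  have eq: "(\<Sum>(r, s)\<in>TN N. \<Lambda> r s) / of_nat (N ^ 2) = (\<Sum>k. a k N)" for N
  proof -
    have "(\<Sum>k. a k N) = (\<Sum>k<N. a k N)"
    proof (rule suminf_finite)
      fix k assume "k \<notin> {..<N}"
      then have "Suc k > N" by simp
      then show "a k N = 0" unfolding a_eq by (simp add: TNbk_empty)
    qed simp
    also have "\<dots> = (\<Sum>k<N. \<Sum>(r, s)\<in>TNbk N b (Suc k). \<Lambda> r s) / of_nat (N ^ 2)"
      unfolding a_eq by (simp add: sum_divide_distrib)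
    also have "(\<Sum>k<N. \<Sum>(r, s)\<in>TNbk N b (Suc k). \<Lambda> r s) = (\<Sum>(r, s)\<in>TN N. \<Lambda> r s)"
      by (rule decomp[symmetric])
    finally show ?thesis by simp
  qed
  have lim: "(\<lambda>N. a k N) \<longlonglongrightarrow> complex_of_real (Mu b / real (Suc k) ^ (b + 1)) * Mbk \<Lambda> b (Suc k)" for k
    unfolding a_def
    by (rule tendsto_mult[OF tendsto_of_real[OF density[OF _ b_pos]] Mlim]) simp
  have bnd: "norm (a k N) \<le> B * (1 / real (Suc k) ^ (b + 1))" for k N
  proof -
    have c0: "0 \<le> real (card (TNbk N b (Suc k))) / real (N ^ 2)" by simp
    have c1: "real (card (TNbk N b (Suc k))) / real (N ^ 2) \<le> 1 / real (Suc k) ^ (b + 1)"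
    proof -
      have "real (card (TNbk N b (Suc k))) / real (N ^ 2) \<le> 1 / real (Suc k) * (1 / real (Suc k ^ b))"
        by (rule density_bound) simp
      also have "\<dots> \<le> 1 / real (Suc k) ^ (b + 1)" by (rule inv_pow_le) auto
      finally show ?thesis .
    qed
    have "norm (a k N) = real (card (TNbk N b (Suc k))) / real (N ^ 2) * norm (avg_bk \<Lambda> b (Suc k) N)"
      unfolding a_def by (simp only: norm_mult norm_of_real abs_of_nonneg[OF c0])
    also have "\<dots> \<le> 1 / real (Suc k) ^ (b + 1) * B"
      by (rule mult_mono[OF c1 avg_norm[OF B]]) simp_all
    finally show ?thesis by (simp add: mult.commute)
  qed
  have T: "(\<lambda>N. \<Sum>k. a k N) \<longlonglongrightarrow> (\<Sum>k. complex_of_real (Mu b / real (Suc k) ^ (b + 1)) * Mbk \<Lambda> b (Suc k))"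
    by (rule tannery_simple[OF lim bnd sZ])
  have X: "(\<lambda>k. complex_of_real (Mu b / real (Suc k) ^ (b + 1)) * Mbk \<Lambda> b (Suc k))
         = (\<lambda>k. complex_of_real (Mu b) * (Mbk \<Lambda> b (Suc k) / of_nat (Suc k) ^ (b + 1)))"
    by (rule ext) (simp add: of_real_divide)
  have Y: "(\<Sum>k. complex_of_real (Mu b) * (Mbk \<Lambda> b (Suc k) / of_nat (Suc k) ^ (b + 1)))
         = complex_of_real (Mu b) * (\<Sum>k. Mbk \<Lambda> b (Suc k) / of_nat (Suc k) ^ (b + 1))"
    by (rule suminf_mult[OF S])
  define Z where "Z = (\<Sum>n. 1 / real (Suc n) ^ (b + 1))"
  have MZ: "Mu b * Z = 1" unfolding Z_def by (rule Mu_zeta[OF b_pos])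
  have zeta: "zeta_nat (b + 1) = complex_of_real Z"
  proof -
    have "complex_of_real Z = (\<Sum>n. complex_of_real (1 / real (Suc n) ^ (b + 1)))"
      unfolding Z_def by (rule suminf_of_real[OF summable_zeta_real[OF b_pos]])
    also have "\<dots> = zeta_nat (b + 1)" unfolding zeta_nat_def by (simp add: of_real_divide)
    finally show ?thesis by simp
  qed
  have Mu_eq: "complex_of_real (Mu b) = 1 / complex_of_real Z"
  proof -
    have "Z \<noteq> 0" using MZ by auto
    then have "Mu b = 1 / Z" using MZ by (simp add: field_simps)
    then show ?thesis by (simp add: of_real_divide)
  qed
  have E: "(\<lambda>N. (\<Sum>(r, s)\<in>TN N. \<Lambda> r s) / of_nat (N ^ 2)) = (\<lambda>N. \<Sum>k. a k N)"
    by (intro ext eq)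
  have "(\<lambda>N. (\<Sum>(r, s)\<in>TN N. \<Lambda> r s) / of_nat (N ^ 2))
        \<longlonglongrightarrow> complex_of_real (Mu b) * (\<Sum>k. Mbk \<Lambda> b (Suc k) / of_nat (Suc k) ^ (b + 1))"
    unfolding E using T unfolding X Y .
  moreover have "complex_of_real (Mu b) * (\<Sum>k. Mbk \<Lambda> b (Suc k) / of_nat (Suc k) ^ (b + 1))
      = (\<Sum>n. Mbk \<Lambda> b (Suc n) / of_nat (Suc n) ^ (b + 1)) / zeta_nat (b + 1)"
    unfolding Mu_eq zeta by simp
  ultimately show ?thesis using S by simp
qed

end
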